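(* Let $k,m$ be positive integers, $n=4k$, and let $A\in\mathbb{R}^{m\times n}$ have $2k$-restricted isometry constant $\delta_{2k}\in[\frac{\sqrt{2}}{2},1)$. Let $x\in\mathbb{R}^n$, $\epsilon\ge 0$, $e\in\mathbb{R}^m$ with $\|e\|_2\le\epsilon$, and $y=Ax+e$. For $p\in(0,1)$ let $x^{\star}$ be a solution of $\min_{\gamma\in\mathbb{R}^n}\|\gamma\|_p$ subject to $\|y-A\gamma\|_2\le\epsilon$, and let $T_0^c=\{k+1,\dots,n\}$. Let $$\bar C(p)=(1+\delta_{2k})2^{\frac p2-1}\Big(\frac{g(p)}{1-\delta_{2k}}\Big)^{p/2}.$$ Then for each $p\in(0,1)$ with $\bar C(p)<1$, $$\|x-x^{\star}\|_p^p\le \bar C_0\|x_{T_0^c}\|_p^p+\bar C_1k^{1-\frac p2}\epsilon^p,\qquad \bar C_0=\frac{2(1+\bar C(p))}{1-\bar C(p)},\quad \bar C_1=\frac{2^{p+2}}{(1-\delta_{2k})^{\frac p2}(1-\bar C(p))}.$$ In particular, if $\epsilon=0$ and $x$ is $k$-sparse, then $x^{\star}=x$.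
   Context: For $1\le s\le n$, the $s$-restricted isometry constant $\delta_s$ of $A$ is the smallest constant such that $(1-\delta_s)\|z\|_2^2\le\|Az\|_2^2\le(1+\delta_s)\|z\|_2^2$ for all $s$-sparse $z\in\mathbb{R}^n$. For $p\in(0,1)$, $\|\gamma\|_p=(\sum_i|\gamma_i|^p)^{1/p}$. For a vector $v$ and index set $T$, $v_T$ is the vector equal to $v$ on $T$ and zero elsewhere. $g(p)=\frac{p}{2}(1-\frac{p}{2})^{\frac{2}{p}-1}$. *)

theory Defs
  imports Complex_Main
begin

text \<open>Vectors in R^n are functions nat => real (only indices < n matter);
  an m x n matrix is a function nat => nat => real (indices i < m, j < n).\<close>

definition matvec :: "(nat \<Rightarrow> nat \<Rightarrow> real) \<Rightarrow> nat \<Rightarrow> (nat \<Rightarrow> real) \<Rightarrow> nat \<Rightarrow> real" where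
  "matvec A n z = (\<lambda>i. \<Sum>j<n. A i j * z j)"

definition norm2 :: "nat \<Rightarrow> (nat \<Rightarrow> real) \<Rightarrow> real" where
  "norm2 d v = sqrt (\<Sum>i<d. (v i)\<^sup>2)"

definition pnorm :: "real \<Rightarrow> nat \<Rightarrow> (nat \<Rightarrow> real) \<Rightarrow> real" where
  "pnorm p d v = (\<Sum>i<d. \<bar>v i\<bar> powr p) powr (1 / p)"

definition sparse :: "nat \<Rightarrow> nat \<Rightarrow> (nat \<Rightarrow> real) \<Rightarrow> bool" where
  "sparse s n z \<longleftrightarrow> card {j\<in>{..<n}. z j \<noteq> 0} \<le> s"

definition ric :: "(nat \<Rightarrow> nat \<Rightarrow> real) \<Rightarrow> nat \<Rightarrow> nat \<Rightarrow> nat \<Rightarrow> real" where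
  "ric A m n s = Inf {\<delta>. \<forall>z. sparse s n z \<longrightarrow>
      (1 - \<delta>) * (norm2 n z)\<^sup>2 \<le> (norm2 m (matvec A n z))\<^sup>2 \<and>
      (norm2 m (matvec A n z))\<^sup>2 \<le> (1 + \<delta>) * (norm2 n z)\<^sup>2}"

definition gfun :: "real \<Rightarrow> real" where
  "gfun p = p / 2 * (1 - p / 2) powr (2 / p - 1)"

definition Cbar :: "real \<Rightarrow> real \<Rightarrow> real" where
  "Cbar \<delta> p = (1 + \<delta>) * 2 powr (p / 2 - 1) * (gfun p / (1 - \<delta>)) powr (p / 2)"

end

theory Submission
  imports Defs "HOL-Analysis.Convex" "HOL-Analysis.L2_Norm"
begin


lemma powr_subadd:
  fixes a b p :: real
  assumes "0 \<le> a" "0 \<le> b" "0 < p" "p \<le> 1"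
  shows "(a + b) powr p \<le> a powr p + b powr p"
proof (cases "a + b = 0")
  case True then show ?thesis using assms by simp
next
  case False
  then have ab: "a + b > 0" using assms by simp
  have 1: "a * (a+b) powr (p-1) \<le> a powr p"
  proof (cases "a = 0")
    case False
    then have "(a+b) powr (p-1) \<le> a powr (p-1)" using assms by (intro powr_mono2') auto
    then have "a * (a+b) powr (p-1) \<le> a * a powr (p-1)" using assms by (simp add: mult_left_mono)
    also have "\<dots> = a powr p" using assms False powr_mult_base[of a "p-1"] by simp
    finally show ?thesis .
  qed simp
  have 2: "b * (a+b) powr (p-1) \<le> b powr p"
  proof (cases "b = 0")
    case False
    then have "(a+b) powr (p-1) \<le> b powr (p-1)" using assms by (intro powr_mono2') auto
    then have "b * (a+b) powr (p-1) \<le> b * b powr (p-1)" using assms by (simp add: mult_left_mono)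
    also have "\<dots> = b powr p" using assms False powr_mult_base[of b "p-1"] by simp
    finally show ?thesis .
  qed simp
  have "(a + b) powr p = (a+b) * (a+b) powr (p-1)" using ab powr_mult_base[of "a+b" "p-1"] by simp
  also have "\<dots> = a * (a+b) powr (p-1) + b * (a+b) powr (p-1)" by (simp add: algebra_simps)
  finally show ?thesis using 1 2 by linarith
qed

lemma amgm_g:
  fixes v L p :: real
  assumes "0 \<le> v" "0 \<le> L" "0 < p" "p < 1"
  shows "v powr (2/p - 1) * (L - v) \<le> gfun p * L powr (2/p)"
proof -
  have g0: "0 \<le> gfun p" using assms unfolding gfun_def by simp
  show ?thesis
  proof (cases "v = 0 \<or> L \<le> v")
    case True
    then show ?thesis
    proof
      assume "v = 0" then show ?thesis using assms g0 by simp
    next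
      assume "L \<le> v"
      then have "v powr (2/p - 1) * (L - v) \<le> 0" by (simp add: mult_nonneg_nonpos)
      also have "0 \<le> gfun p * L powr (2/p)" using g0 by simp
      finally show ?thesis .
    qed
  next
    case False
    then have v0: "0 < v" and vL: "v < L" using assms by auto
    define q where "q = 2/p"
    have q1: "q > 2" using assms unfolding q_def by (simp add: field_simps)
    define a where "a = v / (q - 1)"
    define b where "b = L - v"
    have a0: "a > 0" using v0 q1 unfolding a_def by simp
    have b0: "b > 0" using vL unfolding b_def by simp
    have Y: "a powr ((q-1)/q) * b powr (1/q) \<le> ((q-1)/q) * a + (1/q) * b"
      using q1 a0 b0 by (intro Youngs_inequality_0) (auto simp: field_simps)
    have "((q-1)/q) * a + (1/q) * b = L / q"
      using q1 unfolding a_def b_def by (simp add: field_simps)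
    with Y have Y2: "a powr ((q-1)/q) * b powr (1/q) \<le> L / q" by simp
    have "(a powr ((q-1)/q) * b powr (1/q)) powr q \<le> (L/q) powr q"
      using Y2 q1 by (intro powr_mono2) auto
    moreover have "(a powr ((q-1)/q) * b powr (1/q)) powr q = a powr (q - 1) * b"
      using q1 a0 b0 by (simp add: powr_mult powr_powr)
    ultimately have Z: "a powr (q-1) * b \<le> (L/q) powr q" by simp
    have "v powr (q-1) = (q-1) powr (q-1) * a powr (q-1)"
      using q1 unfolding a_def by (simp add: powr_divide)
    then have "v powr (q-1) * (L - v) = (q-1) powr (q-1) * (a powr (q-1) * b)"
      unfolding b_def by simp
    also have "\<dots> \<le> (q-1) powr (q-1) * (L/q) powr q"
      using Z by (intro mult_left_mono) auto
    also have "\<dots> = gfun p * L powr q"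
    proof -
      have "(L/q) powr q = L powr q / (q powr q)" by (simp add: powr_divide)
      moreover have "q powr q = q * q powr (q-1)" using q1 powr_mult_base[of q "q-1"] by simp
      moreover have "gfun p = (1/q) * ((q-1)/q) powr (q-1)"
      proof -
        have e1: "(q-1)/q = 1 - p/2" unfolding q_def using assms by (simp add: field_simps)
        have e2: "1/q = p/2" unfolding q_def by simp
        show ?thesis unfolding gfun_def e1 e2 unfolding q_def by simp
      qed
      moreover have "((q-1)/q) powr (q-1) = (q-1) powr (q-1) / q powr (q-1)" by (simp add: powr_divide)
      ultimately show ?thesis by (simp add: field_simps)
    qed
    finally show ?thesis unfolding q_def .
  qed
qed

lemma scalar_core:
  fixes kr c d p W Q m r s w :: real
  assumes kr: "kr > 0" and c1: "1 \<le> c" and cd: "c + d = 2" and d0: "0 \<le> d"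
    and p0: "0 < p" and p1: "p < 1"
    and W0: "0 \<le> W" and Q0: "0 \<le> Q" and m0: "0 \<le> m" and r0: "0 \<le> r"
    and s0: "0 \<le> s" and w0: "0 \<le> w"
    and hm: "kr * m powr p \<le> W"
    and hr: "r \<le> m powr (2-p) * Q"
    and hs: "W \<le> kr powr (1-p/2) * s powr (p/2)"
  shows "kr powr (1-p/2) * (max 0 ((w + sqrt(c * r))\<^sup>2 - d * s)) powr (p/2)
      \<le> c * 2 powr (p/2-1) * gfun p powr (p/2) * (W+Q) + 2 * kr powr (1-p/2) * w powr p"
proof -
  define q where "q = 2/p"
  have q2: "q > 2" using p0 p1 unfolding q_def by (simp add: field_simps)
  have qp: "q * p = 2" unfolding q_def using p0 by simp
  have pq: "p * q = 2" unfolding q_def using p0 by simp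
  define v where "v = W / kr"
  define pi where "pi = (W + Q) / kr"
  have v0: "0 \<le> v" using W0 kr unfolding v_def by simp
  have pi0: "0 \<le> pi" using W0 Q0 kr unfolding pi_def by simp
  have g0: "0 \<le> gfun p" using p0 p1 unfolding gfun_def by simp
  have mp: "m powr p \<le> v" using hm kr unfolding v_def by (simp add: field_simps mult.commute)
  have ma: "m powr (2-p) \<le> v powr (q-1)"
  proof -
    have "(m powr p) powr (q-1) \<le> v powr (q-1)" using mp q2 by (intro powr_mono2) auto
    moreover have "(m powr p) powr (q-1) = m powr (2-p)"
      by (simp add: powr_powr algebra_simps qp pq)
    ultimately show ?thesis by simp
  qed
  have Qeq: "Q = kr * (pi - v)" unfolding pi_def v_def using kr by (simp add: field_simps)
  have hb: "c * r \<le> kr * (c * (v powr (q-1) * (pi - v)))"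
  proof -
    have "r \<le> v powr (q-1) * Q" using hr ma Q0 by (meson mult_right_mono order_trans)
    then have "c * r \<le> c * (v powr (q-1) * Q)" using c1 by simp
    then show ?thesis unfolding Qeq by (simp add: algebra_simps)
  qed
  have hc: "kr * v powr q \<le> s"
  proof -
    have "v \<le> kr powr (-(p/2)) * s powr (p/2)"
    proof -
      have "v = W * kr powr (-1)" unfolding v_def using kr by (simp add: powr_minus divide_inverse)
      also have "\<dots> \<le> kr powr (1-p/2) * s powr (p/2) * kr powr (-1)" using hs by (intro mult_right_mono) auto
      also have "\<dots> = (kr powr (1-p/2) * kr powr (-1)) * s powr (p/2)"
        by (metis mult.assoc mult.commute)
      also have "kr powr (1-p/2) * kr powr (-1) = kr powr (-(p/2))"
        by (subst powr_add[symmetric]) simp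
      finally show ?thesis .
    qed
    also have "\<dots> = s powr (p/2) / kr powr (p/2)"
      by (simp only: powr_minus divide_inverse mult.commute)
    also have "\<dots> = (s / kr) powr (p/2)" by (simp only: powr_divide)
    finally have "v \<le> (s / kr) powr (p/2)" .
    then have "v powr q \<le> ((s / kr) powr (p/2)) powr q" using q2 v0 by (intro powr_mono2) auto
    also have "\<dots> = (s / kr) powr 1" using pq by (simp add: powr_powr)
    also have "\<dots> = s / kr" using s0 kr by simp
    finally have "v powr q \<le> s / kr" .
    then show ?thesis using kr by (simp add: pos_le_divide_eq mult.commute)
  qed
  define z where "z = sqrt (kr * (2 * gfun p * (c * pi / 2) powr q))"
  have zarg: "0 \<le> kr * (2 * gfun p * (c * pi / 2) powr q)"
    using kr g0 by (intro mult_nonneg_nonneg) auto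
  have z0: "0 \<le> z" unfolding z_def using zarg by simp
  have zz: "z\<^sup>2 = kr * (2 * gfun p * (c * pi / 2) powr q)"
    unfolding z_def using zarg by (rule real_sqrt_pow2)
  have he: "c * r - d * s \<le> z\<^sup>2"
  proof -
    have "d * s \<ge> d * (kr * v powr q)" if "d \<ge> 0" using hc that by (simp add: mult_left_mono)
    have "c * r - d * s \<le> kr * (c * (v powr (q-1) * (pi - v))) - d * s" using hb by simp
    also have "\<dots> \<le> kr * (c * (v powr (q-1) * (pi - v))) - d * (kr * v powr q)"
      using hc d0 by (simp add: mult_left_mono)
    also have "\<dots> = kr * (2 * (v powr (q-1) * (c * pi / 2 - v)))"
    proof -
      have "v powr q = v powr (q-1) * v" using v0 powr_mult_base[of v "q-1"] by (simp add: mult.commute)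
      then have "kr * (c * (v powr (q-1) * (pi - v))) - d * (kr * v powr q)
          = kr * (c * pi * v powr (q-1)) - (c + d) * (kr * v * v powr (q-1))"
        by (simp add: algebra_simps)
      also have "\<dots> = kr * (2 * (v powr (q-1) * (c * pi / 2 - v)))" unfolding cd
        by (simp add: algebra_simps)
      finally show ?thesis .
    qed
    also have "\<dots> \<le> kr * (2 * (gfun p * (c * pi / 2) powr q))"
      using amgm_g[of v "c * pi / 2" p] v0 pi0 c1 p0 p1 kr unfolding q_def by simp
    finally show ?thesis unfolding zz by (simp add: algebra_simps)
  qed
  define K where "K = 2 powr (1/p)"
  have K1: "1 \<le> K" unfolding K_def using p0 by (intro ge_one_powr_ge_zero) auto
  have KK: "K\<^sup>2 = 2 powr q"
    unfolding K_def q_def by (simp add: power2_eq_square powr_add[symmetric])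
  have Kp: "K powr p = 2" unfolding K_def using p0 by (simp add: powr_powr)
  have hf: "c * r \<le> (K * z)\<^sup>2"
  proof -
    have "c * r \<le> kr * (c * (gfun p * pi powr q))"
      using hb amgm_g[of v pi p] v0 pi0 p0 p1 kr c1 unfolding q_def
      by (smt (verit, best) mult_left_mono)
    also have "\<dots> \<le> (K * z)\<^sup>2"
    proof -
      have cq: "c \<le> c powr q"
      proof -
        have "c powr 1 \<le> c powr q" using c1 q2 by (intro powr_mono) auto
        then show ?thesis using c1 by simp
      qed
      have "(K * z)\<^sup>2 = kr * (2 powr q * (2 * gfun p * (c * pi / 2) powr q))"
        unfolding power_mult_distrib KK zz by simp
      also have "\<dots> = kr * (2 * gfun p * (c powr q * pi powr q))"
        by (simp add: powr_mult powr_divide)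
      finally have e: "(K * z)\<^sup>2 = kr * (2 * gfun p * (c powr q * pi powr q))" .
      have "c * (gfun p * pi powr q) \<le> 2 * gfun p * (c powr q * pi powr q)"
      proof -
        have "c * (gfun p * pi powr q) \<le> c powr q * (gfun p * pi powr q)"
          using cq g0 by (intro mult_right_mono) auto
        also have "\<dots> \<le> 2 * (c powr q * (gfun p * pi powr q))" using g0 by simp
        finally show ?thesis by (simp add: algebra_simps)
      qed
      then show ?thesis unfolding e using kr by (simp add: mult_left_mono)
    qed
    finally show ?thesis .
  qed
  have hg: "(w + sqrt(c * r))\<^sup>2 - d * s \<le> (z + K * w)\<^sup>2"
  proof -
    have sc: "sqrt (c * r) \<le> K * z"
    proof -
      have "sqrt (c * r) \<le> sqrt ((K * z)\<^sup>2)" using hf by (rule real_sqrt_le_mono)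
      also have "\<dots> = K * z" using z0 K1 by simp
      finally show ?thesis .
    qed
    have "(w + sqrt(c * r))\<^sup>2 - d * s = (c * r - d * s) + 2 * w * sqrt(c * r) + w\<^sup>2"
      using c1 r0 by (simp add: power2_eq_square algebra_simps)
    also have "\<dots> \<le> z\<^sup>2 + 2 * w * (K * z) + (K * w)\<^sup>2"
    proof -
      have "2 * w * sqrt(c * r) \<le> 2 * w * (K * z)" using sc w0 by (simp add: mult_left_mono)
      moreover have "w\<^sup>2 \<le> (K * w)\<^sup>2"
      proof -
        have "w \<le> K * w" using K1 w0 by (simp add: mult_right_mono[of 1 K w, simplified])
        then show ?thesis using w0 by (simp add: power_mono)
      qed
      ultimately show ?thesis using he by linarith
    qed
    also have "\<dots> = (z + K * w)\<^sup>2" by (simp add: power2_eq_square algebra_simps)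
    finally show ?thesis .
  qed
  have hh: "(max 0 ((w + sqrt(c * r))\<^sup>2 - d * s)) powr (p/2) \<le> z powr p + 2 * w powr p"
  proof -
    have "(max 0 ((w + sqrt(c * r))\<^sup>2 - d * s)) powr (p/2) \<le> ((z + K * w)\<^sup>2) powr (p/2)"
      using hg p0 by (intro powr_mono2) auto
    also have "\<dots> = (z + K * w) powr p"
    proof -
      have "(z + K * w) powr 2 = (z + K * w)\<^sup>2" using z0 K1 w0 by (intro powr_numeral) auto
      then have "((z + K * w)\<^sup>2) powr (p/2) = ((z + K * w) powr 2) powr (p/2)" by simp
      then show ?thesis by (simp add: powr_powr)
    qed
    also have "\<dots> \<le> z powr p + (K * w) powr p"
      using z0 K1 w0 p0 p1 by (intro powr_subadd) auto
    also have "(K * w) powr p = 2 * w powr p" by (simp add: powr_mult Kp)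
    finally show ?thesis .
  qed
  have hi: "kr powr (1-p/2) * z powr p = c * 2 powr (p/2-1) * gfun p powr (p/2) * (W+Q)"
  proof -
    define B where "B = c * pi / 2"
    have B0: "0 \<le> B" unfolding B_def using c1 pi0 by simp
    have e2: "z powr 2 = z\<^sup>2" using z0 by (intro powr_numeral) auto
    have "(z powr 2) powr (p/2) = z powr p" by (simp add: powr_powr)
    then have "z powr p = (z\<^sup>2) powr (p/2)" unfolding e2 by simp
    also have "\<dots> = (kr * ((2 * gfun p) * B powr q)) powr (p/2)" unfolding zz B_def by simp
    also have "\<dots> = kr powr (p/2) * ((2 * gfun p) powr (p/2) * (B powr q) powr (p/2))"
      by (simp only: powr_mult)
    also have "(B powr q) powr (p/2) = B"
    proof -
      have "(B powr q) powr (p/2) = B powr 1" using qp by (simp add: powr_powr)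
      then show ?thesis using B0 by simp
    qed
    also have "(2 * gfun p) powr (p/2) = 2 powr (p/2) * gfun p powr (p/2)" by (simp only: powr_mult)
    finally have zp: "z powr p = kr powr (p/2) * (2 powr (p/2) * gfun p powr (p/2) * B)" .
    have kk: "kr powr (1-p/2) * kr powr (p/2) = kr"
    proof -
      have "kr powr (1-p/2) * kr powr (p/2) = kr powr (1-p/2 + p/2)" by (simp only: powr_add)
      also have "\<dots> = kr" using kr by simp
      finally show ?thesis .
    qed
    have t2: "2 powr (p/2-1) = 2 powr (p/2) / 2" by (simp add: powr_diff)
    have gen: "\<And>A G. (kr powr (1-p/2) * kr powr (p/2)) * (A * G * (c * ((W+Q)/kr) / 2)) = c * (A/2) * G * (W+Q)"
      unfolding kk using kr by (simp add: field_simps)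
    have "kr powr (1-p/2) * z powr p = (kr powr (1-p/2) * kr powr (p/2)) * (2 powr (p/2) * gfun p powr (p/2) * B)"
      unfolding zp by (simp only: mult.assoc)
    also have "\<dots> = c * (2 powr (p/2) / 2) * gfun p powr (p/2) * (W+Q)"
      unfolding B_def pi_def by (rule gen)
    finally show ?thesis unfolding t2 .
  qed
  have "kr powr (1-p/2) * (max 0 ((w + sqrt(c * r))\<^sup>2 - d * s)) powr (p/2)
      \<le> kr powr (1-p/2) * (z powr p + 2 * w powr p)" using hh by (simp add: mult_left_mono)
  also have "\<dots> = c * 2 powr (p/2-1) * gfun p powr (p/2) * (W+Q) + 2 * kr powr (1-p/2) * w powr p"
    using hi by (simp add: algebra_simps)
  finally show ?thesis .
qed



lemma topk:
  fixes f :: "nat \<Rightarrow> real"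
  assumes "finite B" "k \<le> card B"
  shows "\<exists>T. T \<subseteq> B \<and> card T = k \<and> (\<forall>i\<in>T. \<forall>j\<in>B-T. f j \<le> f i)"
  using assms(2)
proof (induction k)
  case 0 then show ?case by (intro exI[of _ "{}"]) auto
next
  case (Suc k)
  then obtain T where T: "T \<subseteq> B" "card T = k" "\<forall>i\<in>T. \<forall>j\<in>B-T. f j \<le> f i" by auto
  have fT: "finite T" using T(1) assms(1) finite_subset by blast
  have "card T < card B" using Suc.prems T(2) by simp
  have ne: "B - T \<noteq> {}"
  proof
    assume "B - T = {}"
    then have "B \<subseteq> T" by auto
    then have "card B \<le> card T" using fT card_mono by blast
    then show False using \<open>card T < card B\<close> by simp
  qed
  define M where "M = Max (f ` (B - T))"
  have "M \<in> f ` (B - T)" unfolding M_def using ne assms(1) by (intro Max_in) auto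
  then obtain j where j: "j \<in> B - T" "f j = M" by auto
  have jmax: "\<forall>jj\<in>B-T. f jj \<le> f j"
  proof
    fix jj assume "jj \<in> B - T"
    then have "f jj \<le> M" unfolding M_def using assms(1) by (intro Max_ge) auto
    then show "f jj \<le> f j" using j(2) by simp
  qed
  show ?case
  proof (intro exI[of _ "insert j T"] conjI ballI)
    show "insert j T \<subseteq> B" using j T by auto
    show "card (insert j T) = Suc k" using j fT T by simp
    fix i jj assume i: "i \<in> insert j T" and jj: "jj \<in> B - insert j T"
    then show "f jj \<le> f i" using T(3) jmax by auto
  qed
qed

lemma pm:
  fixes f :: "nat \<Rightarrow> real" and p :: real
  assumes "finite I" "card I = k" "k > 0" "0 < p" "p < 1"
  shows "(\<Sum>i\<in>I. \<bar>f i\<bar> powr p) \<le> real k powr (1-p/2) * (\<Sum>i\<in>I. (f i)\<^sup>2) powr (p/2)"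
proof -
  define T where "T = (\<Sum>i\<in>I. (f i)\<^sup>2)"
  have T0: "0 \<le> T" unfolding T_def by (simp add: sum_nonneg)
  show ?thesis
  proof (cases "T = 0")
    case True
    then have "\<forall>i\<in>I. f i = 0" using assms(1) unfolding T_def by (simp add: sum_nonneg_eq_0_iff)
    then show ?thesis using assms by simp
  next
    case False
    then have Tp: "T > 0" using T0 by simp
    have kp: "real k > 0" using assms by simp
    have each: "(real k / T) powr (p/2) * \<bar>f i\<bar> powr p \<le> (p/2) * (real k * (f i)\<^sup>2 / T) + (1 - p/2)" for i
    proof -
      have eq: "(real k / T) powr (p/2) * \<bar>f i\<bar> powr p = (real k * (f i)\<^sup>2 / T) powr (p/2)"
      proof -
        have "\<bar>f i\<bar> powr p = ((f i)\<^sup>2) powr (p/2)"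
        proof -
          have e: "\<bar>f i\<bar> powr 2 = (f i)\<^sup>2" by (subst powr_numeral) auto
          have "(\<bar>f i\<bar> powr 2) powr (p/2) = \<bar>f i\<bar> powr p" by (subst powr_powr) simp
          then show ?thesis unfolding e by simp
        qed
        then show ?thesis by (simp add: powr_mult powr_divide)
      qed
      show ?thesis
      proof (cases "f i = 0")
        case True then show ?thesis using assms by simp
      next
        case False
        have "(real k * (f i)\<^sup>2 / T) powr (p/2) * 1 powr (1 - p/2) \<le> (p/2) * (real k * (f i)\<^sup>2 / T) + (1 - p/2) * 1"
          using assms kp Tp False by (intro Youngs_inequality_0) auto
        then show ?thesis using eq by simp
      qed
    qed
    have "(real k / T) powr (p/2) * (\<Sum>i\<in>I. \<bar>f i\<bar> powr p) = (\<Sum>i\<in>I. (real k / T) powr (p/2) * \<bar>f i\<bar> powr p)"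
      by (simp add: sum_distrib_left)
    also have "\<dots> \<le> (\<Sum>i\<in>I. (p/2) * (real k * (f i)\<^sup>2 / T) + (1 - p/2))"
      by (intro sum_mono each)
    also have "\<dots> = (\<Sum>i\<in>I. ((p/2) * (real k / T)) * (f i)\<^sup>2 + (1 - p/2))"
      by (intro sum.cong) auto
    also have "\<dots> = ((p/2) * (real k / T)) * T + (1 - p/2) * real k"
      using assms unfolding T_def by (simp add: sum.distrib sum_distrib_left)
    also have "\<dots> = real k" using Tp by (simp add: field_simps)
    finally have H: "(real k / T) powr (p/2) * (\<Sum>i\<in>I. \<bar>f i\<bar> powr p) \<le> real k" .
    have pos: "(real k / T) powr (p/2) > 0" using kp Tp by simp
    have "(\<Sum>i\<in>I. \<bar>f i\<bar> powr p) \<le> real k / (real k / T) powr (p/2)"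
      using H pos by (simp add: pos_le_divide_eq mult.commute)
    also have "real k / (real k / T) powr (p/2) = real k powr (1-p/2) * T powr (p/2)"
    proof -
      have a: "(real k / T) powr (p/2) = real k powr (p/2) / T powr (p/2)" by (simp only: powr_divide)
      have b: "real k powr (1-p/2) * real k powr (p/2) = real k"
      proof -
        have "real k powr (1-p/2) * real k powr (p/2) = real k powr (1-p/2+p/2)" by (simp only: powr_add)
        then show ?thesis using kp by simp
      qed
      have c: "real k powr (p/2) > 0" "T powr (p/2) > 0" using kp Tp by auto
      have gen: "\<And>X Y Z::real. Y > 0 \<Longrightarrow> Z > 0 \<Longrightarrow> X * Y / (Y / Z) = X * Z" by (simp add: field_simps)
      show ?thesis unfolding a using gen[OF c, of "real k powr (1-p/2)"] b by simp
    qed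
    finally show ?thesis unfolding T_def .
  qed
qed



lemma norm2_sq: "(norm2 d v)\<^sup>2 = (\<Sum>i<d. (v i)\<^sup>2)"
  unfolding norm2_def by (simp add: sum_nonneg)

lemma norm2_nonneg: "0 \<le> norm2 d v"
  unfolding norm2_def by (simp add: sum_nonneg)

lemma norm2_cong: "(\<And>i. i < d \<Longrightarrow> u i = v i) \<Longrightarrow> norm2 d u = norm2 d v"
  unfolding norm2_def by (metis (no_types, lifting) lessThan_iff sum.cong)

lemma norm2_tri: "norm2 d (\<lambda>i. u i + v i) \<le> norm2 d u + norm2 d v"
  using L2_set_triangle_ineq[of u v "{..<d}"] unfolding norm2_def L2_set_def by simp

lemma norm2_minus: "norm2 d (\<lambda>i. - v i) = norm2 d v"
  unfolding norm2_def by simp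

lemma norm2_diff: "norm2 d (\<lambda>i. u i - v i) \<le> norm2 d u + norm2 d v"
  using norm2_tri[of d u "\<lambda>i. - v i"] norm2_minus[of d v] by simp

lemma matvec_diff: "matvec A n (\<lambda>j. u j - v j) i = matvec A n u i - matvec A n v i"
  unfolding matvec_def by (simp add: algebra_simps sum_subtractf)

lemma matvec_add: "matvec A n (\<lambda>j. u j + v j) i = matvec A n u i + matvec A n v i"
  unfolding matvec_def by (simp add: algebra_simps sum.distrib)

lemma matvec_cong: "(\<And>j. j < n \<Longrightarrow> u j = v j) \<Longrightarrow> matvec A n u i = matvec A n v i"
  unfolding matvec_def by (metis (no_types, lifting) lessThan_iff sum.cong)

lemma ric_prop:
  assumes "sparse s n z"
  shows "(1 - ric A m n s) * (norm2 n z)\<^sup>2 \<le> (norm2 m (matvec A n z))\<^sup>2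
       \<and> (norm2 m (matvec A n z))\<^sup>2 \<le> (1 + ric A m n s) * (norm2 n z)\<^sup>2"
proof -
  define D where "D = {\<delta>. \<forall>z. sparse s n z \<longrightarrow>
      (1 - \<delta>) * (norm2 n z)\<^sup>2 \<le> (norm2 m (matvec A n z))\<^sup>2 \<and>
      (norm2 m (matvec A n z))\<^sup>2 \<le> (1 + \<delta>) * (norm2 n z)\<^sup>2}"
  have ricD: "ric A m n s = Inf D" unfolding ric_def D_def ..
  define SA where "SA = (\<Sum>i<m. \<Sum>j<n. (A i j)\<^sup>2)"
  have SA0: "0 \<le> SA" unfolding SA_def by (simp add: sum_nonneg)
  have bound: "(norm2 m (matvec A n w))\<^sup>2 \<le> SA * (norm2 n w)\<^sup>2" for w
  proof -
    have "(norm2 m (matvec A n w))\<^sup>2 = (\<Sum>i<m. (\<Sum>j<n. A i j * w j)\<^sup>2)"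
      unfolding norm2_sq matvec_def ..
    also have "\<dots> \<le> (\<Sum>i<m. (\<Sum>j<n. (A i j)\<^sup>2) * (\<Sum>j<n. (w j)\<^sup>2))"
      by (intro sum_mono Cauchy_Schwarz_ineq_sum)
    also have "\<dots> = SA * (norm2 n w)\<^sup>2" unfolding SA_def norm2_sq by (simp add: sum_distrib_right)
    finally show ?thesis .
  qed
  have inD: "1 + SA \<in> D"
    unfolding D_def
  proof (intro CollectI allI impI conjI)
    fix w
    show "(1 - (1 + SA)) * (norm2 n w)\<^sup>2 \<le> (norm2 m (matvec A n w))\<^sup>2"
    proof -
      have "(1 - (1 + SA)) * (norm2 n w)\<^sup>2 \<le> 0" using SA0 by (simp add: mult_nonneg_nonneg)
      also have "0 \<le> (norm2 m (matvec A n w))\<^sup>2" by simp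
      finally show ?thesis .
    qed
    show "(norm2 m (matvec A n w))\<^sup>2 \<le> (1 + (1 + SA)) * (norm2 n w)\<^sup>2"
      using bound[of w] by (smt (verit) zero_le_power2 mult_right_mono)
  qed
  then have Dne: "D \<noteq> {}" by auto
  define N where "N = (norm2 n z)\<^sup>2"
  define M where "M = (norm2 m (matvec A n z))\<^sup>2"
  have N0: "0 \<le> N" "0 \<le> M" unfolding N_def M_def by auto
  have Dz: "\<And>\<delta>. \<delta> \<in> D \<Longrightarrow> (1 - \<delta>) * N \<le> M \<and> M \<le> (1 + \<delta>) * N"
    using assms unfolding D_def N_def M_def by blast
  show ?thesis
  proof (cases "N = 0")
    case True
    then have "M \<le> 0" using Dz[OF inD] by simp
    then show ?thesis using True N0 unfolding N_def[symmetric] M_def[symmetric] by simp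
  next
    case False
    then have Np: "N > 0" using N0 by simp
    have l1: "1 - M / N \<le> Inf D"
    proof (rule cInf_greatest[OF Dne])
      fix \<delta> assume "\<delta> \<in> D"
      then have "(1 - \<delta>) * N \<le> M" using Dz by blast
      then show "1 - M / N \<le> \<delta>" using Np by (simp add: field_simps)
    qed
    have l2: "M / N - 1 \<le> Inf D"
    proof (rule cInf_greatest[OF Dne])
      fix \<delta> assume "\<delta> \<in> D"
      then have "M \<le> (1 + \<delta>) * N" using Dz by blast
      then show "M / N - 1 \<le> \<delta>" using Np by (simp add: field_simps)
    qed
    have "(1 - Inf D) * N \<le> M" using l1 Np by (simp add: field_simps)
    moreover have "M \<le> (1 + Inf D) * N" using l2 Np by (simp add: field_simps)
    ultimately show ?thesis unfolding ricD N_def M_def by simp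
  qed
qed



lemma sq_le_powr:
  fixes a mm p :: real
  assumes "0 \<le> a" "a \<le> mm" "0 < p" "p < 1"
  shows "a\<^sup>2 \<le> mm powr (2-p) * a powr p"
proof (cases "a = 0")
  case True then show ?thesis by simp
next
  case False
  then have a0: "a > 0" using assms by simp
  have "a\<^sup>2 = a powr 2" using assms by simp
  also have "\<dots> = a powr (2-p) * a powr p" by (simp flip: powr_add)
  also have "\<dots> \<le> mm powr (2-p) * a powr p"
    using assms by (intro mult_right_mono powr_mono2) auto
  finally show ?thesis .
qed

lemma abs_powr_tri:
  fixes a b p :: real
  assumes "0 < p" "p < 1"
  shows "\<bar>a + b\<bar> powr p \<le> \<bar>a\<bar> powr p + \<bar>b\<bar> powr p"
proof -
  have "\<bar>a + b\<bar> powr p \<le> (\<bar>a\<bar> + \<bar>b\<bar>) powr p" using assms by (intro powr_mono2) auto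
  also have "\<dots> \<le> \<bar>a\<bar> powr p + \<bar>b\<bar> powr p" using assms by (intro powr_subadd) auto
  finally show ?thesis .
qed

lemma final_alg:
  fixes H0 P Cb E eta :: real
  assumes "H0 \<le> Cb * P + E" "P \<le> H0 + 2 * eta" "0 \<le> Cb" "Cb < 1"
  shows "H0 + P \<le> 2 * (1 + Cb) / (1 - Cb) * eta + 2 * E / (1 - Cb)"
proof -
  have a: "(1 - Cb) * P \<le> E + 2 * eta" using assms by (simp add: algebra_simps)
  have "(1 + Cb) * ((1 - Cb) * P) \<le> (1 + Cb) * (E + 2 * eta)"
    using a assms by (intro mult_left_mono) auto
  moreover have "(1 - Cb) * H0 \<le> (1 - Cb) * (Cb * P + E)"
    using assms by (intro mult_left_mono) auto
  ultimately have "(1 - Cb) * (H0 + P) \<le> 2 * (1 + Cb) * eta + 2 * E"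
    by (simp add: algebra_simps)
  then have "H0 + P \<le> (2 * (1 + Cb) * eta + 2 * E) / (1 - Cb)"
    using assms by (simp add: pos_le_divide_eq mult.commute)
  also have "\<dots> = 2 * (1 + Cb) / (1 - Cb) * eta + 2 * E / (1 - Cb)"
    by (simp only: add_divide_distrib times_divide_eq_left)
  finally show ?thesis .
qed

lemma main_general:
  fixes k m n :: nat and A :: "nat \<Rightarrow> nat \<Rightarrow> real"
    and x xs :: "nat \<Rightarrow> real" and \<epsilon> p \<delta> :: real and T0 :: "nat set"
  assumes k0: "k > 0" and nk: "n = 4 * k" and T0n: "T0 \<subseteq> {..<n}" and cT0: "card T0 = k"
    and rip: "\<forall>z. sparse (2*k) n z \<longrightarrow> (1 - \<delta>) * (norm2 n z)\<^sup>2 \<le> (norm2 m (matvec A n z))\<^sup>2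
               \<and> (norm2 m (matvec A n z))\<^sup>2 \<le> (1 + \<delta>) * (norm2 n z)\<^sup>2"
    and d0: "0 \<le> \<delta>" and d1: "\<delta> < 1" and p0: "0 < p" and p1: "p < 1" and e0: "0 \<le> \<epsilon>"
    and Ah: "norm2 m (\<lambda>i. matvec A n xs i - matvec A n x i) \<le> 2 * \<epsilon>"
    and cone0: "(\<Sum>i<n. \<bar>xs i\<bar> powr p) \<le> (\<Sum>i<n. \<bar>x i\<bar> powr p)"
    and Cb1: "Cbar \<delta> p < 1"
  shows "(\<Sum>i<n. \<bar>x i - xs i\<bar> powr p) \<le> 2 * (1 + Cbar \<delta> p) / (1 - Cbar \<delta> p) * (\<Sum>i\<in>{..<n}-T0. \<bar>x i\<bar> powr p)
       + 2 powr (p + 2) / ((1 - \<delta>) powr (p/2) * (1 - Cbar \<delta> p)) * real k powr (1 - p/2) * \<epsilon> powr p"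
proof -
  define h where "h i = xs i - x i" for i
  define T0c where "T0c = {..<n} - T0"
  have fT0: "finite T0" using T0n finite_subset by blast
  have fT0c: "finite T0c" unfolding T0c_def by simp
  have cT0c: "card T0c = 3 * k" unfolding T0c_def using T0n cT0 nk fT0 by (simp add: card_Diff_subset)
  obtain T1 where T1: "T1 \<subseteq> T0c" "card T1 = k" "\<forall>i\<in>T1. \<forall>j\<in>T0c-T1. \<bar>h j\<bar> \<le> \<bar>h i\<bar>"
    using topk[OF fT0c, of k "\<lambda>i. \<bar>h i\<bar>"] cT0c by auto
  define R where "R = T0c - T1"
  define S where "S = T0 \<union> T1"
  have fT1: "finite T1" using T1(1) fT0c finite_subset by blast
  have fR: "finite R" unfolding R_def using fT0c by simp
  have dis01: "T0 \<inter> T1 = {}" using T1(1) unfolding T0c_def by auto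
  have cS: "card S = 2 * k" unfolding S_def using dis01 fT0 fT1 cT0 T1(2) by (simp add: card_Un_disjoint)
  have cR: "card R = 2 * k" unfolding R_def using T1 fT1 cT0c by (simp add: card_Diff_subset)
  have Sn: "S \<subseteq> {..<n}" unfolding S_def using T0n T1(1) unfolding T0c_def by auto
  have Rn: "R \<subseteq> {..<n}" unfolding R_def T0c_def by auto
  have SR: "S \<inter> R = {}" unfolding S_def R_def T0c_def by auto
  have SRn: "\<And>j. j < n \<Longrightarrow> j \<in> S \<or> j \<in> R" unfolding S_def R_def T0c_def by auto
  have T0c_split: "T0c = T1 \<union> R" "T1 \<inter> R = {}" unfolding R_def using T1(1) by auto
  define hS where "hS j = (if j \<in> S then h j else 0)" for j
  define hR where "hR j = (if j \<in> R then h j else 0)" for j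
  have hsum: "\<And>j. j < n \<Longrightarrow> h j = hS j + hR j" unfolding hS_def hR_def using SRn SR by auto
  have spS: "sparse (2*k) n hS"
  proof -
    have "{j\<in>{..<n}. hS j \<noteq> 0} \<subseteq> S" unfolding hS_def by auto
    then have "card {j\<in>{..<n}. hS j \<noteq> 0} \<le> card S" using fT0 fT1 unfolding S_def by (intro card_mono) auto
    then show ?thesis unfolding sparse_def cS .
  qed
  have spR: "sparse (2*k) n hR"
  proof -
    have "{j\<in>{..<n}. hR j \<noteq> 0} \<subseteq> R" unfolding hR_def by auto
    then have "card {j\<in>{..<n}. hR j \<noteq> 0} \<le> card R" using fR by (intro card_mono) auto
    then show ?thesis unfolding sparse_def cR .
  qed
  define t where "t = (\<Sum>i\<in>T0. (h i)\<^sup>2)"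
  define s where "s = (\<Sum>i\<in>T1. (h i)\<^sup>2)"
  define r where "r = (\<Sum>i\<in>R. (h i)\<^sup>2)"
  have t0: "0 \<le> t" "0 \<le> s" "0 \<le> r" unfolding t_def s_def r_def by (auto intro: sum_nonneg)
  have nS: "(norm2 n hS)\<^sup>2 = t + s"
  proof -
    have "(norm2 n hS)\<^sup>2 = (\<Sum>j<n. if j \<in> S then (h j)\<^sup>2 else 0)" unfolding norm2_sq hS_def
      by (intro sum.cong) auto
    also have "\<dots> = (\<Sum>j\<in>{..<n} \<inter> S. (h j)\<^sup>2)" by (simp add: sum.inter_restrict)
    also have "{..<n} \<inter> S = S" using Sn by auto
    also have "(\<Sum>j\<in>S. (h j)\<^sup>2) = t + s" unfolding S_def t_def s_def
      using fT0 fT1 dis01 by (simp add: sum.union_disjoint)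
    finally show ?thesis .
  qed
  have nR: "(norm2 n hR)\<^sup>2 = r"
  proof -
    have "(norm2 n hR)\<^sup>2 = (\<Sum>j<n. if j \<in> R then (h j)\<^sup>2 else 0)" unfolding norm2_sq hR_def
      by (intro sum.cong) auto
    also have "\<dots> = (\<Sum>j\<in>{..<n} \<inter> R. (h j)\<^sup>2)" by (simp add: sum.inter_restrict)
    also have "{..<n} \<inter> R = R" using Rn by auto
    finally show ?thesis unfolding r_def .
  qed
  define c where "c = 1 + \<delta>"
  define d where "d = 1 - \<delta>"
  have ripS: "d * (t + s) \<le> (norm2 m (matvec A n hS))\<^sup>2" using rip spS nS unfolding d_def by metis
  have ripR: "(norm2 m (matvec A n hR))\<^sup>2 \<le> c * r" using rip spR nR unfolding c_def by metis
  have nAh: "norm2 m (matvec A n h) \<le> 2 * \<epsilon>"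
  proof -
    have "norm2 m (matvec A n h) = norm2 m (\<lambda>i. matvec A n xs i - matvec A n x i)"
      unfolding h_def by (intro norm2_cong) (simp add: matvec_diff)
    then show ?thesis using Ah by simp
  qed
  have nAS: "norm2 m (matvec A n hS) \<le> 2 * \<epsilon> + sqrt (c * r)"
  proof -
    have "matvec A n hS i = matvec A n h i - matvec A n hR i" for i
    proof -
      have "matvec A n h i = matvec A n (\<lambda>j. hS j + hR j) i" by (intro matvec_cong hsum)
      then show ?thesis by (simp add: matvec_add)
    qed
    then have "norm2 m (matvec A n hS) = norm2 m (\<lambda>i. matvec A n h i - matvec A n hR i)"
      by (intro norm2_cong) auto
    also have "\<dots> \<le> norm2 m (matvec A n h) + norm2 m (matvec A n hR)" by (rule norm2_diff)
    also have "norm2 m (matvec A n hR) \<le> sqrt (c * r)"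
      using ripR norm2_nonneg by (metis real_le_rsqrt)
    finally show ?thesis using nAh by simp
  qed
  have dpos: "0 < d" using d1 unfolding d_def by simp
  have key: "d * t \<le> max 0 ((2 * \<epsilon> + sqrt (c * r))\<^sup>2 - d * s)"
  proof -
    have "(norm2 m (matvec A n hS))\<^sup>2 \<le> (2 * \<epsilon> + sqrt (c * r))\<^sup>2"
      using nAS norm2_nonneg by (intro power_mono) auto
    then have "d * (t + s) \<le> (2 * \<epsilon> + sqrt (c * r))\<^sup>2" using ripS by simp
    then show ?thesis by (simp add: algebra_simps)
  qed
  define W where "W = (\<Sum>i\<in>T1. \<bar>h i\<bar> powr p)"
  define Q where "Q = (\<Sum>i\<in>R. \<bar>h i\<bar> powr p)"
  define H0 where "H0 = (\<Sum>i\<in>T0. \<bar>h i\<bar> powr p)"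
  define P where "P = (\<Sum>i\<in>T0c. \<bar>h i\<bar> powr p)"
  define eta where "eta = (\<Sum>i\<in>T0c. \<bar>x i\<bar> powr p)"
  have PWQ: "P = W + Q" unfolding P_def W_def Q_def T0c_split(1) using fT1 fR T0c_split(2)
    by (simp add: sum.union_disjoint)
  have W0: "0 \<le> W" "0 \<le> Q" unfolding W_def Q_def by (auto intro: sum_nonneg)
  have T1ne: "T1 \<noteq> {}" using T1(2) k0 by auto
  define mm where "mm = Min ((\<lambda>i. \<bar>h i\<bar>) ` T1)"
  have mmle: "\<And>i. i \<in> T1 \<Longrightarrow> mm \<le> \<bar>h i\<bar>" unfolding mm_def using fT1 by auto
  have mmin: "mm \<in> (\<lambda>i. \<bar>h i\<bar>) ` T1" unfolding mm_def using fT1 T1ne by (intro Min_in) auto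
  have mm0: "0 \<le> mm" using mmin by auto
  have Rle: "\<And>j. j \<in> R \<Longrightarrow> \<bar>h j\<bar> \<le> mm" using mmin T1(3) unfolding R_def by auto
  have hm: "real k * mm powr p \<le> W"
  proof -
    have "(\<Sum>i\<in>T1. mm powr p) \<le> W" unfolding W_def
      using mmle mm0 p0 by (intro sum_mono powr_mono2) auto
    then show ?thesis using T1(2) by simp
  qed
  have hr: "r \<le> mm powr (2-p) * Q"
  proof -
    have "r \<le> (\<Sum>i\<in>R. mm powr (2-p) * \<bar>h i\<bar> powr p)" unfolding r_def
    proof (intro sum_mono)
      fix i assume "i \<in> R"
      then show "(h i)\<^sup>2 \<le> mm powr (2-p) * \<bar>h i\<bar> powr p"
        using sq_le_powr[of "\<bar>h i\<bar>" mm p] Rle p0 p1 by simp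
    qed
    then show ?thesis unfolding Q_def by (simp add: sum_distrib_left)
  qed
  have hs: "W \<le> real k powr (1-p/2) * s powr (p/2)"
    unfolding W_def s_def using pm[OF fT1 T1(2) k0 p0 p1] .
  have ht: "H0 \<le> real k powr (1-p/2) * t powr (p/2)"
    unfolding H0_def t_def using pm[OF fT0 cT0 k0 p0 p1] .
  define C where "C = c * 2 powr (p/2-1) * gfun p powr (p/2)"
  have core: "real k powr (1-p/2) * (max 0 ((2 * \<epsilon> + sqrt(c * r))\<^sup>2 - d * s)) powr (p/2)
      \<le> C * (W+Q) + 2 * real k powr (1-p/2) * (2 * \<epsilon>) powr p"
    unfolding C_def
    using scalar_core[of "real k" c d p W Q mm r s "2 * \<epsilon>"] k0 d0 d1 p0 p1 W0 mm0 t0 e0 hm hr hs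
    unfolding c_def d_def by simp
  have H0b: "H0 \<le> Cbar \<delta> p * P + 2 * real k powr (1-p/2) * (2 * \<epsilon>) powr p / d powr (p/2)"
  proof -
    have "d powr (p/2) * H0 \<le> d powr (p/2) * (real k powr (1-p/2) * t powr (p/2))"
      using ht by (intro mult_left_mono) auto
    also have "\<dots> = real k powr (1-p/2) * (d * t) powr (p/2)" by (simp add: powr_mult)
    also have "\<dots> \<le> real k powr (1-p/2) * (max 0 ((2 * \<epsilon> + sqrt(c * r))\<^sup>2 - d * s)) powr (p/2)"
      using key dpos t0 p0 by (intro mult_left_mono powr_mono2) auto
    also have "\<dots> \<le> C * P + 2 * real k powr (1-p/2) * (2 * \<epsilon>) powr p" using core PWQ by simp
    finally have X: "d powr (p/2) * H0 \<le> C * P + 2 * real k powr (1-p/2) * (2 * \<epsilon>) powr p" .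
    have dp: "d powr (p/2) > 0" using dpos by simp
    have "H0 \<le> (C * P + 2 * real k powr (1-p/2) * (2 * \<epsilon>) powr p) / d powr (p/2)"
      using X dp by (simp add: pos_le_divide_eq mult.commute)
    also have "\<dots> = (C / d powr (p/2)) * P + 2 * real k powr (1-p/2) * (2 * \<epsilon>) powr p / d powr (p/2)"
      by (simp add: add_divide_distrib)
    also have "C / d powr (p/2) = Cbar \<delta> p"
      unfolding C_def Cbar_def c_def d_def by (simp add: powr_divide)
    finally show ?thesis .
  qed
  have cone: "P \<le> H0 + 2 * eta"
  proof -
    have split: "\<And>f. (\<Sum>i<n. f i) = (\<Sum>i\<in>T0. f i) + (\<Sum>i\<in>T0c. f i)"
      unfolding T0c_def using T0n by (simp add: sum.subset_diff[of T0 "{..<n}"] add.commute)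
    have a: "\<bar>x i\<bar> powr p \<le> \<bar>xs i\<bar> powr p + \<bar>h i\<bar> powr p" for i
    proof -
      have "x i = xs i + (- h i)" unfolding h_def by simp
      then have "\<bar>x i\<bar> powr p \<le> \<bar>xs i\<bar> powr p + \<bar>- h i\<bar> powr p"
        using abs_powr_tri[OF p0 p1, of "xs i" "- h i"] by simp
      then show ?thesis by simp
    qed
    have b: "\<bar>h i\<bar> powr p \<le> \<bar>xs i\<bar> powr p + \<bar>x i\<bar> powr p" for i
    proof -
      have "h i = xs i + (- x i)" unfolding h_def by simp
      then have "\<bar>h i\<bar> powr p \<le> \<bar>xs i\<bar> powr p + \<bar>- x i\<bar> powr p"
        using abs_powr_tri[OF p0 p1, of "xs i" "- x i"] by simp
      then show ?thesis by simp
    qed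
    have A1: "(\<Sum>i\<in>T0. \<bar>x i\<bar> powr p) \<le> (\<Sum>i\<in>T0. \<bar>xs i\<bar> powr p) + H0"
      unfolding H0_def using a by (simp add: sum.distrib[symmetric] sum_mono)
    have A2: "P \<le> (\<Sum>i\<in>T0c. \<bar>xs i\<bar> powr p) + eta"
      unfolding P_def eta_def using b by (simp add: sum.distrib[symmetric] sum_mono)
    have "(\<Sum>i\<in>T0. \<bar>xs i\<bar> powr p) + (\<Sum>i\<in>T0c. \<bar>xs i\<bar> powr p) \<le> (\<Sum>i\<in>T0. \<bar>x i\<bar> powr p) + eta"
      using cone0 split[of "\<lambda>i. \<bar>xs i\<bar> powr p"] split[of "\<lambda>i. \<bar>x i\<bar> powr p"] unfolding eta_def by simp
    then show ?thesis using A1 A2 by simp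
  qed
  have Cb0: "0 \<le> Cbar \<delta> p" unfolding Cbar_def gfun_def using d0 d1 p0 p1 by simp
  have fin: "H0 + P \<le> 2 * (1 + Cbar \<delta> p) / (1 - Cbar \<delta> p) * eta
      + 2 * (2 * real k powr (1-p/2) * (2 * \<epsilon>) powr p / d powr (p/2)) / (1 - Cbar \<delta> p)"
    by (rule final_alg[OF H0b cone Cb0 Cb1])
  have lhs: "(\<Sum>i<n. \<bar>x i - xs i\<bar> powr p) = H0 + P"
  proof -
    have "(\<Sum>i<n. \<bar>x i - xs i\<bar> powr p) = (\<Sum>i<n. \<bar>h i\<bar> powr p)"
      unfolding h_def by (simp add: abs_minus_commute)
    also have "\<dots> = H0 + P" unfolding H0_def P_def T0c_def using T0n
      by (simp add: sum.subset_diff[of T0 "{..<n}"] add.commute)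
    finally show ?thesis .
  qed
  have rhs: "2 * (2 * real k powr (1-p/2) * (2 * \<epsilon>) powr p / d powr (p/2)) / (1 - Cbar \<delta> p)
      = 2 powr (p + 2) / ((1 - \<delta>) powr (p/2) * (1 - Cbar \<delta> p)) * real k powr (1 - p/2) * \<epsilon> powr p"
  proof -
    have "(2 * \<epsilon>) powr p = 2 powr p * \<epsilon> powr p" by (simp add: powr_mult)
    moreover have "2 powr (p + 2) = 4 * 2 powr p" by (simp add: powr_add)
    ultimately show ?thesis unfolding d_def by (simp add: field_simps)
  qed
  show ?thesis using fin unfolding lhs rhs eta_def T0c_def .
qed



lemma pnorm_pow:
  assumes "0 < p"
  shows "pnorm p d v powr p = (\<Sum>i<d. \<bar>v i\<bar> powr p)"
proof -
  have "pnorm p d v powr p = (\<Sum>i<d. \<bar>v i\<bar> powr p) powr 1"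
    unfolding pnorm_def using assms by (simp add: powr_powr)
  then show ?thesis by (simp add: sum_nonneg)
qed

theorem theorem3:
  fixes k m n :: nat and A :: "nat \<Rightarrow> nat \<Rightarrow> real"
    and x e y xs :: "nat \<Rightarrow> real" and \<epsilon> p :: real
  assumes "k > 0" and "m > 0" and "n = 4 * k"
    and "sqrt 2 / 2 \<le> ric A m n (2 * k)" and "ric A m n (2 * k) < 1"
    and "\<epsilon> \<ge> 0" and "norm2 m e \<le> \<epsilon>"
    and "\<forall>i<m. y i = matvec A n x i + e i"
    and "0 < p" and "p < 1"
    and "norm2 m (\<lambda>i. y i - matvec A n xs i) \<le> \<epsilon>"
    and "\<forall>\<gamma>. norm2 m (\<lambda>i. y i - matvec A n \<gamma> i) \<le> \<epsilon> \<longrightarrow> pnorm p n xs \<le> pnorm p n \<gamma>"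
    and "Cbar (ric A m n (2 * k)) p < 1"
  shows "(pnorm p n (\<lambda>i. x i - xs i) powr p
           \<le> 2 * (1 + Cbar (ric A m n (2 * k)) p) / (1 - Cbar (ric A m n (2 * k)) p)
               * (\<Sum>i\<in>{k..<n}. \<bar>x i\<bar> powr p)
             + 2 powr (p + 2) / ((1 - ric A m n (2 * k)) powr (p / 2) * (1 - Cbar (ric A m n (2 * k)) p))
               * real k powr (1 - p / 2) * \<epsilon> powr p)
         \<and> (\<epsilon> = 0 \<and> sparse k n x \<longrightarrow> (\<forall>i<n. xs i = x i))"
proof -
  note k0 = assms(1) and nk = assms(3) and dlo = assms(4) and d1 = assms(5) and e0 = assms(6)
    and ne = assms(7) and yeq = assms(8) and p0 = assms(9) and p1 = assms(10)
    and feas = assms(11) and minp = assms(12) and Cb1 = assms(13)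
  define \<delta> where "\<delta> = ric A m n (2 * k)"
  have rip: "\<forall>z. sparse (2*k) n z \<longrightarrow> (1 - \<delta>) * (norm2 n z)\<^sup>2 \<le> (norm2 m (matvec A n z))\<^sup>2
               \<and> (norm2 m (matvec A n z))\<^sup>2 \<le> (1 + \<delta>) * (norm2 n z)\<^sup>2"
    unfolding \<delta>_def using ric_prop by blast
  have d0: "0 \<le> \<delta>" unfolding \<delta>_def using dlo by (smt (verit) real_sqrt_ge_zero divide_nonneg_pos)
  have Ah: "norm2 m (\<lambda>i. matvec A n xs i - matvec A n x i) \<le> 2 * \<epsilon>"
  proof -
    have "norm2 m (\<lambda>i. matvec A n xs i - matvec A n x i) = norm2 m (\<lambda>i. e i - (y i - matvec A n xs i))"
      using yeq by (intro norm2_cong) auto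
    also have "\<dots> \<le> norm2 m e + norm2 m (\<lambda>i. y i - matvec A n xs i)" by (rule norm2_diff)
    finally show ?thesis using ne feas by simp
  qed
  have cone0: "(\<Sum>i<n. \<bar>xs i\<bar> powr p) \<le> (\<Sum>i<n. \<bar>x i\<bar> powr p)"
  proof -
    have "norm2 m (\<lambda>i. y i - matvec A n x i) = norm2 m e" using yeq by (intro norm2_cong) auto
    then have "pnorm p n xs \<le> pnorm p n x" using minp ne by auto
    moreover have "0 \<le> pnorm p n xs" unfolding pnorm_def by simp
    ultimately have "pnorm p n xs powr p \<le> pnorm p n x powr p"
      using p0 by (intro powr_mono2) auto
    then show ?thesis using pnorm_pow[OF p0] by simp
  qed
  have gen: "\<And>T0. T0 \<subseteq> {..<n} \<Longrightarrow> card T0 = k \<Longrightarrow> (\<Sum>i<n. \<bar>x i - xs i\<bar> powr p) \<le> 2 * (1 + Cbar \<delta> p) / (1 - Cbar \<delta> p) * (\<Sum>i\<in>{..<n}-T0. \<bar>x i\<bar> powr p)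
       + 2 powr (p + 2) / ((1 - \<delta>) powr (p/2) * (1 - Cbar \<delta> p)) * real k powr (1 - p/2) * \<epsilon> powr p"
    using main_general[OF k0 nk _ _ rip d0 _ p0 p1 e0 Ah cone0] d1 Cb1 unfolding \<delta>_def by blast
  have lhs: "pnorm p n (\<lambda>i. x i - xs i) powr p = (\<Sum>i<n. \<bar>x i - xs i\<bar> powr p)"
    using pnorm_pow[OF p0] .
  have part1: "pnorm p n (\<lambda>i. x i - xs i) powr p
           \<le> 2 * (1 + Cbar \<delta> p) / (1 - Cbar \<delta> p) * (\<Sum>i\<in>{k..<n}. \<bar>x i\<bar> powr p)
             + 2 powr (p + 2) / ((1 - \<delta>) powr (p / 2) * (1 - Cbar \<delta> p)) * real k powr (1 - p / 2) * \<epsilon> powr p"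
  proof -
    have "{..<n} - {..<k} = {k..<n}" by auto
    moreover have "{..<k} \<subseteq> {..<n}" using nk by auto
    ultimately show ?thesis unfolding lhs using gen[of "{..<k}"] by simp
  qed
  have part2: "\<epsilon> = 0 \<and> sparse k n x \<longrightarrow> (\<forall>i<n. xs i = x i)"
  proof (intro impI allI)
    fix i assume H: "\<epsilon> = 0 \<and> sparse k n x" and i: "i < n"
    define supp where "supp = {j\<in>{..<n}. x j \<noteq> 0}"
    have "card supp \<le> k" using H unfolding sparse_def supp_def by simp
    moreover have "k \<le> card {..<n}" using nk by simp
    moreover have "supp \<subseteq> {..<n}" unfolding supp_def by auto
    ultimately obtain T0 where T0: "supp \<subseteq> T0" "T0 \<subseteq> {..<n}" "card T0 = k"
      using exists_subset_between[of supp k "{..<n}"] by auto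
    have eta0: "(\<Sum>j\<in>{..<n}-T0. \<bar>x j\<bar> powr p) = 0"
      using T0(1) unfolding supp_def by (intro sum.neutral) auto
    have "(\<Sum>j<n. \<bar>x j - xs j\<bar> powr p) \<le> 0"
      using gen[OF T0(2,3)] eta0 H p0 by simp
    then have "\<forall>j\<in>{..<n}. \<bar>x j - xs j\<bar> powr p = 0"
      using sum_nonneg_eq_0_iff[of "{..<n}" "\<lambda>j. \<bar>x j - xs j\<bar> powr p"]
      by (simp add: order_antisym sum_nonneg)
    then have "\<bar>x i - xs i\<bar> powr p = 0" using i by simp
    then show "xs i = x i" by simp
  qed
  show ?thesis using part1 part2 unfolding \<delta>_def by blast
qed

end
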